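(* Let $D\ge 2$, $\eta=\mathrm{diag}(-1,1,\dots,1)$, and let $M$ be an arbitrary invertible real $D\times D$ matrix. If the matrix $\eta M^t\eta M$ has no (real) negative eigenvalues, then $M$ can be written as $M=\lambda s$ with $\lambda$ a real Lorentz matrix (i.e. $\lambda^t\eta\lambda=\eta$) and $s$ a real symmetric matrix.
   Context: $m^t$ denotes the transpose of the matrix $m$. *)

theory Defs
  imports "HOL-Analysis.Analysis"
begin

text \<open>Minkowski metric eta = diag(-1,1,...,1); the time-like direction is the
  least index of the (finite, well-ordered) index type.\<close>
definition minkowski :: "real ^ ('n::{finite,wellorder}) ^ ('n::{finite,wellorder})" where
  "minkowski = (\<chi> i j. if i = j then (if i = (LEAST k. True) then -1 else 1) else 0)"

definition real_eigenvalue :: "real ^ 'n ^ 'n \<Rightarrow> real \<Rightarrow> bool" where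
  "real_eigenvalue A c \<longleftrightarrow> (\<exists>v. v \<noteq> 0 \<and> A *v v = c *\<^sub>R v)"

definition lorentz_matrix :: "real ^ ('n::{finite,wellorder}) ^ ('n::{finite,wellorder}) \<Rightarrow> bool" where
  "lorentz_matrix L \<longleftrightarrow> transpose L ** minkowski ** L = minkowski"

definition symmetric_matrix :: "real ^ 'n ^ 'n \<Rightarrow> bool" where
  "symmetric_matrix S \<longleftrightarrow> transpose S = S"

end

theory Submission
  imports Defs "HOL-Computational_Algebra.Computational_Algebra" "HOL-Computational_Algebra.Field_as_Ring"
begin


abbreviation X :: "real poly" where "X \<equiv> [:0,1:]"

lemma map_of_real_add:
  "map_poly (of_real::real\<Rightarrow>complex) (p+q) = map_poly of_real p + map_poly of_real q"
  by (intro poly_eqI) (simp add: coeff_map_poly)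

lemma map_of_real_mult:
  "map_poly (of_real::real\<Rightarrow>complex) (p*q) = map_poly of_real p * map_poly of_real q"
  by (induction p) (simp_all add: map_poly_pCons map_poly_smult map_of_real_add)

lemma cpoly_real: "poly (map_poly (of_real::real\<Rightarrow>complex) p) (of_real x) = of_real (poly p x)"
  by (induction p) (auto simp: map_poly_pCons)

lemma coprime_X: assumes "poly g 0 \<noteq> 0" shows "coprime g X"
proof -
  have "prime_elem X" by (rule prime_elem_linear_field_poly) simp
  moreover have "\<not> X dvd g" using assms poly_eq_0_iff_dvd[of g 0] by simp
  ultimately show ?thesis using prime_elem_imp_coprime coprime_commute by blast
qed

lemma alg2: fixes p g w m c k1 x :: "'a::comm_ring_1"
  assumes w: "p^2 - x = g*w" and E: "k1*p + m*g = 1" and c2: "2*c = 1"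
  shows "(p + (-(c*w*k1))*g)^2 - x = g^2*(w*m+(-(c*w*k1))^2)"
proof -
  have xe: "x = p^2 - g*w" using w by (simp add: algebra_simps)
  have "(p + (-(c*w*k1))*g)^2 - x - g^2*(w*m+(-(c*w*k1))^2) = g*w*(1 - (2*c)*(k1*p) - m*g)"
    unfolding xe by (simp add: power2_eq_square algebra_simps)
  also have "1 - (2*c)*(k1*p) - m*g = 1 - (k1*p + m*g)" using c2 by (simp add: diff_diff_eq)
  also have "\<dots> = 0" using E by simp
  finally show ?thesis by simp
qed

lemma c2: "2 * [:1/2:] = (1::real poly)"
  by (simp add: numeral_poly)

lemma hensel:
  fixes g p :: "real poly"
  assumes cg: "coprime g X" and d: "g dvd p^2 - X"
  shows "\<exists>p'. g^2 dvd p'^2 - X"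
proof -
  have cp: "coprime p g"
  proof (rule coprimeI)
    fix e assume e1: "e dvd p" and e2: "e dvd g"
    have "e dvd p^2" using e1 by (simp add: power2_eq_square)
    moreover have "e dvd p^2 - X" using e2 d dvd_trans by blast
    ultimately have "e dvd p^2 - (p^2 - X)" by (rule dvd_diff)
    then have "e dvd X" by simp
    then show "is_unit e" using cg e2 coprime_common_divisor by blast
  qed
  obtain k1 m where E: "k1*p + m*g = 1"
    using bezout_coefficients_fst_snd[of p g] cp by auto
  obtain w where w: "p^2 - X = g*w" using d by (auto elim: dvdE)
  have "(p + (-([:1/2:]*w*k1))*g)^2 - X = g^2*(w*m+(-([:1/2:]*w*k1))^2)"
    by (rule alg2[OF w E c2])
  then show ?thesis by (metis dvd_triv_left)
qed

lemma hensel_pow: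
  fixes g p :: "real poly"
  assumes cg: "coprime g X" and d: "g dvd p^2 - X"
  shows "\<exists>p'. g^(2^k) dvd p'^2 - X"
proof (induction k)
  case 0 then show ?case using d by auto
next
  case (Suc k)
  then obtain p' where "g^(2^k) dvd p'^2 - X" by auto
  moreover have "coprime (g^(2^k)) X" using cg coprime_power_left_iff by blast
  ultimately obtain p'' where "(g^(2^k))^2 dvd p''^2 - X" using hensel by blast
  then show ?case by (metis power_mult power_Suc2 mult.commute)
qed

lemma crt:
  fixes ff rr pf pr' :: "real poly"
  assumes cfr: "coprime ff rr" and df: "ff dvd pf^2 - X" and dr: "rr dvd pr'^2 - X"
  shows "\<exists>p. ff*rr dvd p^2 - X"
proof -
  obtain aq bq where E: "aq*ff + bq*rr = 1"
    using bezout_coefficients_fst_snd[of ff rr] cfr by auto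
  define p where "p = pf*bq*rr + pr'*aq*ff"
  have vr: "bq*rr = 1 - aq*ff" using E by (metis add_diff_cancel_left')
  have uf: "aq*ff = 1 - bq*rr" using E by (metis add_diff_cancel_right')
  have "p - pf = ff*(aq*(pr' - pf))"
  proof -
    have "p - pf = pf*(bq*rr) + pr'*aq*ff - pf" by (simp add: p_def mult.assoc)
    also have "\<dots> = pf*(1 - aq*ff) + pr'*aq*ff - pf" by (simp only: vr)
    finally show ?thesis by (simp add: algebra_simps)
  qed
  hence a: "ff dvd p - pf" by simp
  have "p - pr' = rr*(bq*(pf - pr'))"
  proof -
    have "p - pr' = pf*bq*rr + pr'*(aq*ff) - pr'" by (simp add: p_def mult.assoc)
    also have "\<dots> = pf*bq*rr + pr'*(1 - bq*rr) - pr'" by (simp only: uf)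
    finally show ?thesis by (simp add: algebra_simps)
  qed
  hence b: "rr dvd p - pr'" by simp
  have id1: "p^2 - X = (p - pf)*(p+pf) + (pf^2 - X)" by (simp add: power2_eq_square algebra_simps)
  have id2: "p^2 - X = (p - pr')*(p+pr') + (pr'^2 - X)" by (simp add: power2_eq_square algebra_simps)
  have "ff dvd p^2 - X" unfolding id1 using a df by simp
  moreover have "rr dvd p^2 - X" unfolding id2 using b dr by simp
  ultimately show ?thesis using divides_mult cfr by blast
qed

lemma lin_sq: fixes a :: real assumes "a > 0" shows "[:-a,1:] dvd [:sqrt a:]^2 - X"
proof -
  have "[:sqrt a:]^2 - X = smult (-1) [:-a,1:]" using assms by (simp add: power2_eq_square)
  then show ?thesis by (metis dvd_smult dvd_refl)
qed

lemma quad_sq: fixes b c :: real assumes bc: "b^2 < 4*c" shows "\<exists>p. [:c,b,1:] dvd p^2 - X"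
proof -
  have c0: "c > 0" using bc by (smt (verit) zero_le_power2)
  define r where "r = sqrt c"
  have r0: "r > 0" and rr: "r*r = c" using c0 by (auto simp: r_def)
  have "\<bar>b\<bar> < 2*r"
  proof -
    have "\<bar>b\<bar> = sqrt (b^2)" by simp
    also have "\<dots> < sqrt (4*c)" using bc by (rule real_sqrt_less_mono)
    also have "\<dots> = 2*r" by (simp add: r_def real_sqrt_mult)
    finally show ?thesis .
  qed
  hence d0: "2*r - b > 0" by linarith
  define d where "d = 2*r - b"
  define al where "al = 1 / sqrt d"
  have al2: "al*al*d = 1" using d0 by (simp add: al_def d_def)
  define be where "be = al*r"
  have "[:be,al:]^2 - X = smult (al*al) [:c,b,1:]"
  proof -
    have e1: "be*be = al*al*c" using rr by (simp add: be_def)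
    have e2: "be*al + al*be - 1 = al*al*b"
    proof -
      have "al*al*(2*r) = al*al*(d + b)" by (simp add: d_def)
      hence "be*al + al*be = 1 + al*al*b" using al2 by (simp add: be_def algebra_simps)
      thus ?thesis by simp
    qed
    show ?thesis using e1 e2 by (simp add: power2_eq_square algebra_simps)
  qed
  then show ?thesis by (metis dvd_smult dvd_refl)
qed

lemma deg1_root: fixes a :: "real poly" assumes "degree a = 1" shows "\<exists>t. poly a t = 0"
proof -
  obtain u v where a: "a = [:u,v:]" "v \<noteq> 0" using degree1_coeffs[OF assms] by metis
  have "poly a (-u/v) = 0" using a by simp
  then show ?thesis by blast
qed

lemma irr_quad: fixes f :: "real poly"
  assumes d: "degree f = 2" and nr: "\<And>t. poly f t \<noteq> 0"
  shows "irreducible f"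
proof (rule irreducibleI)
  show f0: "f \<noteq> 0" using d by auto
  show "\<not> f dvd 1" using d is_unit_iff_degree[OF f0] by simp
  fix a b assume fab: "f = a * b"
  have a0: "a \<noteq> 0" and b0: "b \<noteq> 0" using f0 fab by auto
  have dd: "degree a + degree b = 2" using d fab degree_mult_eq[OF a0 b0] by simp
  have "degree a \<noteq> 1"
  proof
    assume "degree a = 1"
    then obtain t where "poly a t = 0" using deg1_root by blast
    then have "poly f t = 0" using fab by simp
    then show False using nr by blast
  qed
  moreover have "degree b \<noteq> 1"
  proof
    assume "degree b = 1"
    then obtain t where "poly b t = 0" using deg1_root by blast
    then have "poly f t = 0" using fab by simp
    then show False using nr by blast
  qed
  ultimately have "degree a = 0 \<or> degree b = 0" using dd by linarith
  then show "a dvd 1 \<or> b dvd 1" using a0 b0 is_unit_iff_degree by blast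
qed

lemma deg_le1: fixes r :: "real poly" assumes "degree r \<le> 1" shows "r = [:coeff r 0, coeff r 1:]"
proof (rule poly_eqI)
  fix n show "coeff r n = coeff [:coeff r 0, coeff r 1:] n"
  proof (cases n)
    case 0 then show ?thesis by simp
  next
    case (Suc m) then show ?thesis using assms by (cases m) (auto simp: coeff_eq_0)
  qed
qed

lemma factor_exists:
  fixes q :: "real poly"
  assumes dq: "degree q > 0" and roots: "\<And>a. poly q a = 0 \<Longrightarrow> a > 0"
  shows "\<exists>f. prime_elem f \<and> f dvd q \<and> degree f > 0 \<and> (\<exists>p. f dvd p^2 - X)"
proof -
  define qc where "qc = map_poly (of_real::real\<Rightarrow>complex) q"
  have "degree qc = degree q" unfolding qc_def by (simp add: degree_map_poly)
  hence "\<not> (\<exists>a l. a \<noteq> 0 \<and> l = 0 \<and> qc = pCons a l)" using dq by auto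
  then obtain z where z: "poly qc z = 0" using fundamental_theorem_of_algebra_alt by blast
  show ?thesis
  proof (cases "Im z = 0")
    case True
    define a where "a = Re z"
    have "z = of_real a" using True by (simp add: a_def complex_eq_iff)
    hence "of_real (poly q a) = (0::complex)" using z cpoly_real[of q a] by (simp add: qc_def)
    hence qa: "poly q a = 0" by simp
    hence a0: "a > 0" using roots by blast
    have "prime_elem [:-a,1:]" by (rule prime_elem_linear_field_poly) simp
    moreover have "[:-a,1:] dvd q" using qa poly_eq_0_iff_dvd by blast
    moreover have "degree [:-a,1:] > 0" by simp
    moreover have "[:-a,1:] dvd [:sqrt a:]^2 - X" using lin_sq[OF a0] .
    ultimately show ?thesis by blast
  next
    case False
    define b where "b = -2 * Re z"
    define c where "c = Re z ^ 2 + Im z ^ 2"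
    define f where "f = [:c,b,1:]"
    have im: "0 < Im z * Im z" using False not_real_square_gt_zero by blast
    have bc: "b^2 < 4*c" using im by (simp add: b_def c_def power2_eq_square)
    have df: "degree f = 2" by (simp add: f_def)
    have nr: "poly f t \<noteq> 0" for t
    proof -
      have "poly f t = (t - Re z)^2 + Im z^2" by (simp add: f_def b_def c_def power2_eq_square algebra_simps)
      also have "\<dots> > 0" using False by (simp add: add_nonneg_pos)
      finally show ?thesis by simp
    qed
    have pf: "prime_elem f" using irr_quad[OF df nr] field_poly_irreducible_imp_prime by blast
    have fz: "poly (map_poly (of_real::real\<Rightarrow>complex) f) z = 0"
    proof -
      have "poly (map_poly (of_real::real\<Rightarrow>complex) f) z = of_real c + z * (of_real b + z)"
        by (simp add: f_def map_poly_pCons)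
      also have "\<dots> = 0" by (simp add: complex_eq_iff b_def c_def power2_eq_square algebra_simps)
      finally show ?thesis .
    qed
    define r where "r = q mod f"
    have f0: "f \<noteq> 0" using df by auto
    have "q = f * (q div f) + r" by (simp add: r_def)
    hence "poly qc z = poly (map_poly of_real f) z * poly (map_poly of_real (q div f)) z + poly (map_poly of_real r) z"
      unfolding qc_def by (metis map_of_real_add map_of_real_mult poly_add poly_mult)
    hence rz: "poly (map_poly (of_real::real\<Rightarrow>complex) r) z = 0" using z fz by simp
    have "r = 0"
    proof (rule ccontr)
      assume "r \<noteq> 0"
      hence "degree r < 2" using degree_mod_less[OF f0, of q] df by (simp add: r_def)
      hence re: "r = [:coeff r 0, coeff r 1:]" using deg_le1 by simp
      have "of_real (coeff r 0) + z * of_real (coeff r 1) = (0::complex)"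
        using rz by (subst (asm) re) (simp add: map_poly_pCons)
      hence "coeff r 0 + Re z * coeff r 1 = 0 \<and> (Im z = 0 \<or> coeff r 1 = 0)" by (simp add: complex_eq_iff)
      hence "coeff r 1 = 0" "coeff r 0 = 0" using False by auto
      hence "r = 0" using re by simp
      then show False using \<open>r \<noteq> 0\<close> by blast
    qed
    hence "f dvd q" by (simp add: r_def mod_eq_0_iff_dvd)
    moreover have "\<exists>p. f dvd p^2 - X" using quad_sq[OF bc] by (simp add: f_def)
    ultimately show ?thesis using pf df by auto
  qed
qed

lemma sqrt_mod:
  fixes q :: "real poly"
  assumes "q \<noteq> 0" and "\<And>a. poly q a = 0 \<Longrightarrow> a > 0"
  shows "\<exists>p. q dvd p^2 - X"
  using assms
proof (induction "degree q" arbitrary: q rule: less_induct)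
  case less
  show ?case
  proof (cases "degree q = 0")
    case True
    hence "is_unit q" using less.prems is_unit_iff_degree by blast
    then show ?thesis by (meson unit_imp_dvd)
  next
    case False
    then obtain f pf where pf: "prime_elem f" and fq: "f dvd q" and df: "degree f > 0"
      and dpf: "f dvd pf^2 - X"
      using factor_exists[of q] less.prems by blast
    obtain r where qr: "q = f * r" using fq by (auto elim: dvdE)
    have f0: "f \<noteq> 0" and r0: "r \<noteq> 0" using less.prems(1) qr by auto
    have "degree q = degree f + degree r" using qr degree_mult_eq[OF f0 r0] by simp
    hence lt: "degree r < degree q" using df by linarith
    have rroots: "poly r a = 0 \<Longrightarrow> a > 0" for a using less.prems(2)[of a] qr by simp
    obtain pr where dpr: "r dvd pr^2 - X" using less.hyps[OF lt r0 rroots] by blast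
    show ?thesis
    proof (cases "f dvd r")
      case True
      have "poly r 0 \<noteq> 0" using rroots by fastforce
      hence "coprime r X" by (rule coprime_X)
      then obtain p' where "r^2 dvd p'^2 - X" using hensel dpr by blast
      moreover have "q dvd r^2" using True qr by (simp add: power2_eq_square)
      ultimately show ?thesis using dvd_trans by blast
    next
      case False
      hence "coprime f r" using pf prime_elem_imp_coprime by blast
      then show ?thesis using crt dpf dpr qr by blast
    qed
  qed
qed



definition peval :: "real poly \<Rightarrow> real^'n^'n \<Rightarrow> real^'n^'n" where
  "peval p A = fold_coeffs (\<lambda>a B. a *\<^sub>R mat 1 + A ** B) p 0"

lemma peval_0 [simp]: "peval 0 A = 0" by (simp add: peval_def)

lemma peval_pCons [simp]: "peval (pCons a p) A = a *\<^sub>R mat 1 + A ** peval p A"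
  by (cases "p = 0"; cases "a = 0") (auto simp: peval_def)

lemma mat_mul_scaleR_right: "(A::real^'n^'m) ** (c *\<^sub>R B) = c *\<^sub>R (A ** B)"
  by (simp add: matrix_matrix_mult_def vec_eq_iff sum_distrib_left mult_ac)

lemma mat_mul_scaleR_left: "(c *\<^sub>R (A::real^'n^'m)) ** B = c *\<^sub>R (A ** B)"
  by (simp add: matrix_matrix_mult_def vec_eq_iff sum_distrib_left mult_ac)

lemma mat_add_rdistrib: "((A::real^'n^'m) + B) ** C = A ** C + B ** C"
  by (simp add: matrix_matrix_mult_def vec_eq_iff sum.distrib distrib_right)

lemma mat_diff_rdistrib: "((A::real^'n^'m) - B) ** C = A ** C - B ** C"
  by (simp add: matrix_matrix_mult_def vec_eq_iff sum_subtractf left_diff_distrib)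

lemma transpose_add: "transpose ((A::real^'n^'m) + B) = transpose A + transpose B"
  by (simp add: transpose_def vec_eq_iff)

lemma peval_add: "peval (p + q) A = peval p A + peval q A"
proof (induction p arbitrary: q)
  case 0 then show ?case by simp
next
  case (pCons a p)
  obtain b q' where q: "q = pCons b q'" by (cases q) auto
  show ?case by (simp add: q pCons.IH matrix_add_ldistrib scaleR_add_left algebra_simps)
qed

lemma peval_smult: "peval (smult c p) A = c *\<^sub>R peval p A"
  by (induction p) (simp_all add: mat_mul_scaleR_right scaleR_add_right)

lemma peval_mult: "peval (p * q) A = peval p A ** peval q A"
proof (induction p)
  case 0 then show ?case by simp
next
  case (pCons a p)
  have "peval (pCons a p * q) A = peval (smult a q + pCons 0 (p * q)) A" by simp
  also have "\<dots> = a *\<^sub>R peval q A + A ** (peval p A ** peval q A)"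
    by (simp only: peval_add peval_smult peval_pCons pCons.IH) simp
  also have "\<dots> = peval (pCons a p) A ** peval q A"
    by (simp add: mat_add_rdistrib mat_mul_scaleR_left matrix_mul_assoc)
  finally show ?case .
qed

lemma peval_diff: "peval (p - q) A = peval p A - peval q A"
  using peval_add[of "p - q" q A] by (simp add: algebra_simps)

lemma peval_X: "peval [:0,1:] A = A" by simp

lemma peval_comm: "peval p A ** A = A ** peval p A"
  by (induction p) (simp_all add: mat_add_rdistrib matrix_add_ldistrib mat_mul_scaleR_left
       mat_mul_scaleR_right matrix_mul_assoc[symmetric])

lemma transpose_zero: "transpose (0::real^'n^'m) = 0"
  by (simp add: transpose_def vec_eq_iff)

lemma peval_monom: "peval (monom c i) A = c *\<^sub>R peval (monom 1 i) A"
proof -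
  have "monom c i = smult c (monom 1 i)" by (simp add: smult_monom)
  then show ?thesis by (simp add: peval_smult)
qed

lemma peval_transpose:
  assumes AE: "transpose A ** E = E ** A"
  shows "transpose (peval p A) ** E = E ** peval p A"
proof (induction p)
  case 0 then show ?case by (simp add: transpose_zero)
next
  case (pCons a p)
  let ?P = "peval p A"
  have "transpose (peval (pCons a p) A) ** E = a *\<^sub>R E + transpose ?P ** (transpose A ** E)"
    by (simp add: transpose_add transpose_scalar matrix_transpose_mul mat_add_rdistrib
        mat_mul_scaleR_left matrix_mul_assoc)
  also have "\<dots> = a *\<^sub>R E + (transpose ?P ** E) ** A" by (simp add: AE matrix_mul_assoc)
  also have "\<dots> = a *\<^sub>R E + E ** (?P ** A)" by (simp add: pCons.IH matrix_mul_assoc)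
  also have "\<dots> = E ** peval (pCons a p) A"
    by (simp add: peval_comm matrix_add_ldistrib mat_mul_scaleR_right matrix_mul_assoc)
  finally show ?case .
qed

lemma peval_sum: "finite I \<Longrightarrow> peval (\<Sum>i\<in>I. f i) A = (\<Sum>i\<in>I. peval (f i) A)"
  by (induction I rule: finite_induct) (simp_all add: peval_add)

lemma annih_exists: "\<exists>q::real poly. q \<noteq> 0 \<and> peval q (A::real^'n^'n) = 0"
proof -
  define N where "N = DIM(real^'n^'n)"
  define P where "P i = peval (monom 1 i) A" for i
  show ?thesis
  proof (cases "inj_on P {..N}")
    case False
    then obtain i j where ij: "i \<noteq> j" "P i = P j" unfolding inj_on_def by blast
    define q where "q = monom (1::real) i - monom 1 j"
    have "coeff q i = 1" using ij by (simp add: q_def coeff_monom)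
    hence "q \<noteq> 0" by auto
    moreover have "peval q A = 0" using ij by (simp add: q_def peval_diff P_def)
    ultimately show ?thesis by blast
  next
    case True
    define S where "S = P ` {..N}"
    have fS: "finite S" and cS: "card S = N + 1" using True by (simp_all add: S_def card_image)
    have "\<not> independent S" using independent_bound[of S] cS N_def by auto
    then obtain u where u1: "\<exists>v\<in>S. u v \<noteq> 0" and u2: "(\<Sum>v\<in>S. u v *\<^sub>R v) = 0"
      using real_vector.dependent_finite[OF fS] by blast
    define q where "q = (\<Sum>i\<le>N. monom (u (P i)) i)"
    have "peval q A = (\<Sum>i\<le>N. u (P i) *\<^sub>R P i)"
      unfolding q_def P_def by (simp add: peval_sum peval_monom[of "u _"])
    also have "\<dots> = (\<Sum>v\<in>S. u v *\<^sub>R v)" unfolding S_def using sum.reindex[OF True, of "\<lambda>v. u v *\<^sub>R v"] by simp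
    also have "\<dots> = 0" by (rule u2)
    finally have pq: "peval q A = 0" .
    obtain i0 where i0: "i0 \<le> N" "u (P i0) \<noteq> 0" using u1 S_def by auto
    have "coeff q i0 = u (P i0)" using i0 by (simp add: q_def coeff_sum coeff_monom)
    hence "q \<noteq> 0" using i0 by auto
    then show ?thesis using pq by blast
  qed
qed



definition sgn_m :: "'n::{finite,wellorder} \<Rightarrow> real" where
  "sgn_m i = (if i = (LEAST k. True) then -1 else 1)"

lemma mink_entry: "(minkowski :: real^('n::{finite,wellorder})^('n::{finite,wellorder})) $ i $ k = (if i = k then sgn_m i else 0)"
  unfolding minkowski_def sgn_m_def by simp

lemma sgn_m_sq: "sgn_m i * sgn_m i = 1" by (simp add: sgn_m_def)

lemma mink_T: "transpose minkowski = (minkowski :: real^('n::{finite,wellorder})^('n::{finite,wellorder}))"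
  unfolding vec_eq_iff transpose_def by (simp add: mink_entry)

lemma mink_sq: "(minkowski :: real^('n::{finite,wellorder})^('n::{finite,wellorder})) ** minkowski = mat 1"
proof -
  have "(\<Sum>k\<in>UNIV. (if i = k then sgn_m i else 0) * (if k = j then sgn_m k else 0))
        = (if i = j then 1 else (0::real))" for i j :: 'n
  proof -
    have "(\<Sum>k\<in>UNIV. (if i = k then sgn_m i else 0) * (if k = j then sgn_m k else 0))
        = (\<Sum>k\<in>UNIV. if k = i then sgn_m i * (if i = j then sgn_m i else 0) else 0)"
      by (rule sum.cong) auto
    also have "\<dots> = sgn_m i * (if i = j then sgn_m i else 0)" by (subst sum.delta) auto
    finally show ?thesis using sgn_m_sq[of i] by auto
  qed
  then show ?thesis unfolding vec_eq_iff matrix_matrix_mult_def mat_def by (simp add: mink_entry)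
qed

lemma mink_sq': "(B::real^('n::{finite,wellorder})^'m) ** minkowski ** minkowski = B"
  by (metis matrix_mul_assoc mink_sq matrix_mul_rid)



lemma eig_of_root:
  fixes A :: "real^'n^'n" and q :: "real poly"
  assumes q0: "q \<noteq> 0" and qA: "peval q A = 0"
    and minq: "\<And>q'. q' \<noteq> 0 \<Longrightarrow> peval q' A = 0 \<Longrightarrow> degree q \<le> degree q'"
    and root: "poly q a = 0"
  shows "real_eigenvalue A a"
proof -
  obtain r where qr: "q = [:-a,1:] * r" using root poly_eq_0_iff_dvd by (metis dvdE)
  have r0: "r \<noteq> 0" using q0 qr by auto
  have "degree ([:-a,1:] * r) = degree [:-a,1:] + degree r" by (rule degree_mult_eq) (simp_all add: r0)
  hence "degree q = 1 + degree r" using qr by simp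
  hence "peval r A \<noteq> 0" using minq[of r] r0 by fastforce
  then obtain i j where ij: "peval r A $ i $ j \<noteq> 0" by (metis vec_eq_iff zero_index)
  define R where "R = peval r A"
  have "peval q A = peval [:-a,1:] A ** peval r A" unfolding qr by (rule peval_mult)
  hence "0 = peval [:-a,1:] A ** R" using qA by (simp add: R_def)
  also have "\<dots> = A ** R - a *\<^sub>R R" by (simp add: mat_diff_rdistrib mat_mul_scaleR_left)
  finally have AR: "A ** R = a *\<^sub>R R" by simp
  define v where "v = column j R"
  have "v \<noteq> 0" using ij by (simp add: v_def R_def column_def vec_eq_iff) (metis)
  moreover have "A *v v = a *\<^sub>R v"
  proof -
    have "(A *v v) $ k = (A ** R) $ k $ j" for k
      by (simp add: v_def column_def matrix_vector_mult_def matrix_matrix_mult_def)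
    then show ?thesis using AR by (simp add: vec_eq_iff v_def column_def)
  qed
  ultimately show ?thesis unfolding real_eigenvalue_def by blast
qed



theorem proposition4:
  fixes M :: "real ^ ('n::{finite,wellorder}) ^ ('n::{finite,wellorder})"
  assumes "CARD('n) \<ge> 2"
    and "invertible M"
    and "\<not> (\<exists>c<0. real_eigenvalue (minkowski ** transpose M ** minkowski ** M) c)"
  shows "\<exists>L S. lorentz_matrix L \<and> symmetric_matrix S \<and> M = L ** S"
proof -
  define E where "E = (minkowski :: real^('n::{finite,wellorder})^('n::{finite,wellorder}))"
  define A where "A = E ** transpose M ** E ** M"
  have EE: "E ** E = mat 1" unfolding E_def by (rule mink_sq)
  have ET: "transpose E = E" unfolding E_def by (rule mink_T)
  have EE': "B ** E ** E = B" for B :: "real^('n::{finite,wellorder})^('n::{finite,wellorder})" unfolding E_def by (rule mink_sq')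
  have G: "E ** A = transpose M ** E ** M"
  proof -
    have "E ** A = (E ** E) ** transpose M ** E ** M" by (simp add: A_def matrix_mul_assoc)
    also have "\<dots> = transpose M ** E ** M" unfolding EE by simp
    finally show ?thesis .
  qed
  have AE0: "transpose A ** E = transpose M ** E ** M"
    by (simp add: A_def matrix_transpose_mul ET matrix_mul_assoc EE')
  have AE: "transpose A ** E = E ** A" using AE0 G by simp
  have dE: "det E * det E = 1" using EE by (metis det_mul det_I)
  have dM: "det M \<noteq> 0" using assms(2) invertible_det_nz by blast
  have dA: "det A \<noteq> 0" using dE dM by (auto simp: A_def det_mul)
  have invA: "invertible A" using dA invertible_det_nz by blast
  obtain q0 :: "real poly" where "q0 \<noteq> 0 \<and> peval q0 A = 0" using annih_exists by blast
  then obtain q :: "real poly" where q: "q \<noteq> 0 \<and> peval q A = 0"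
    and qmin: "\<And>q'. q' \<noteq> 0 \<and> peval q' A = 0 \<Longrightarrow> degree q \<le> degree q'"
    using ex_has_least_nat[of "\<lambda>q. q \<noteq> 0 \<and> peval q A = 0" q0 degree] by blast
  have roots: "a > 0" if "poly q a = 0" for a
  proof -
    have ev: "real_eigenvalue A a" using eig_of_root[of q A a] q qmin that by blast
    have "\<not> a < 0" using assms(3) ev by (auto simp: A_def E_def)
    moreover have "a \<noteq> 0"
    proof
      assume "a = 0"
      then obtain v where v: "v \<noteq> 0" "A *v v = 0" using ev by (auto simp: real_eigenvalue_def)
      have "A *v v = A *v 0" using v by simp
      hence "v = 0" using inj_matrix_vector_mult[OF invA] by (meson injD)
      then show False using v by simp
    qed
    ultimately show ?thesis by linarith
  qed
  obtain p where "q dvd p^2 - X" using sqrt_mod[of q] q roots by blast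
  then obtain h where h: "p^2 - X = q * h" by (auto elim: dvdE)
  define Y where "Y = peval p A"
  have "peval (p^2 - X) A = peval q A ** peval h A" unfolding h by (rule peval_mult)
  hence "Y ** Y - A = 0" using q by (simp add: Y_def power2_eq_square peval_diff peval_mult)
  hence YY: "Y ** Y = A" by simp
  define S where "S = E ** Y"
  have symS: "transpose S = S"
    unfolding S_def Y_def by (simp add: matrix_transpose_mul ET peval_transpose[OF AE])
  have "det Y * det Y = det A" using YY by (metis det_mul)
  hence "det S \<noteq> 0" using dE dA by (auto simp: S_def det_mul)
  hence "invertible S" using invertible_det_nz by blast
  then obtain S' where S1: "S ** S' = mat 1" and S2: "S' ** S = mat 1"
    unfolding invertible_def by blast
  define L where "L = M ** S'"
  have MLS: "M = L ** S" unfolding L_def by (simp add: matrix_mul_assoc[symmetric] S2)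
  have EA: "E ** A = S ** E ** S"
  proof -
    have "E ** A = E ** Y ** Y" using YY by (metis matrix_mul_assoc)
    also have "\<dots> = E ** Y ** E ** E ** Y" by (simp add: EE')
    also have "\<dots> = S ** E ** S" by (simp add: S_def matrix_mul_assoc)
    finally show ?thesis .
  qed
  have TS: "transpose S' ** S = mat 1"
  proof -
    have "transpose S' ** S = transpose S' ** transpose S" by (simp add: symS)
    also have "\<dots> = transpose (S ** S')" by (simp add: matrix_transpose_mul)
    also have "\<dots> = mat 1" by (simp add: S1)
    finally show ?thesis .
  qed
  have "transpose L ** E ** L = transpose S' ** (transpose M ** E ** M) ** S'"
    by (simp add: L_def matrix_transpose_mul matrix_mul_assoc)
  also have "\<dots> = transpose S' ** (S ** E ** S) ** S'" by (simp add: G[symmetric] EA)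
  also have "\<dots> = (transpose S' ** S) ** E ** (S ** S')" by (simp add: matrix_mul_assoc)
  also have "\<dots> = E" by (simp add: TS S1)
  finally have "lorentz_matrix L" by (simp add: lorentz_matrix_def E_def)
  moreover have "symmetric_matrix S" using symS by (simp add: symmetric_matrix_def)
  ultimately show ?thesis using MLS by blast
qed


end
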